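(* Let $F\subset A^*$ be a recurrent set and let $X\subset F$ be an $F$-thin set. The following conditions are equivalent: (i) $X$ is an $F$-maximal bifix code; (ii) $X$ is a prefix code which is left $F$-complete; (ii') $X$ is a suffix code which is right $F$-complete; (iii) $X$ is both an $F$-maximal prefix code and an $F$-maximal suffix code.
   Context: $A$ is a finite alphabet, $A^*$ the free monoid, $1$ the empty word, $A^+=A^*\setminus\{1\}$. A set $F\subset A^*$ is factorial if it is nonempty and contains all factors of its elements; it is recurrent if it is factorial and for all $u,w\in F$ there is $v\in F$ with $uvw\in F$. A prefix code is a set $X\subset A^+$ in which no element is a proper prefix of another; a suffix code is defined symmetrically; a bifix code is both. For $X\subset F$: $X$ is an $F$-maximal prefix (resp. suffix, bifix) code if it is a prefix (resp. suffix, bifix) code not properly contained in any prefix (resp. suffix, bifix) code $Y\subset F$. $X$ is $F$-thin if some word of $F$ is not a factor of any word of $X$. $X$ is right $F$-complete if every word of $F$ is a prefix of a word of $X^*$, and left $F$-complete if every word of $F$ is a suffix of a word of $X^*$. *)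

theory Defs
  imports Main "HOL-Library.Sublist"
begin

definition factor :: "'a list \<Rightarrow> 'a list \<Rightarrow> bool" where
  "factor u w \<longleftrightarrow> (\<exists>p s. w = p @ u @ s)"

definition factorial :: "'a set \<Rightarrow> 'a list set \<Rightarrow> bool" where
  "factorial A F \<longleftrightarrow> F \<subseteq> lists A \<and> F \<noteq> {} \<and>
     (\<forall>w\<in>F. \<forall>u. factor u w \<longrightarrow> u \<in> F)"

definition recurrent :: "'a set \<Rightarrow> 'a list set \<Rightarrow> bool" where
  "recurrent A F \<longleftrightarrow> factorial A F \<and>
     (\<forall>u\<in>F. \<forall>w\<in>F. \<exists>v\<in>F. u @ v @ w \<in> F)"

definition prefix_code :: "'a list set \<Rightarrow> bool" where
  "prefix_code X \<longleftrightarrow> [] \<notin> X \<and> (\<forall>x\<in>X. \<forall>y\<in>X. \<not> strict_prefix x y)"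

definition suffix_code :: "'a list set \<Rightarrow> bool" where
  "suffix_code X \<longleftrightarrow> [] \<notin> X \<and> (\<forall>x\<in>X. \<forall>y\<in>X. \<not> strict_suffix x y)"

definition bifix_code :: "'a list set \<Rightarrow> bool" where
  "bifix_code X \<longleftrightarrow> prefix_code X \<and> suffix_code X"

definition F_maximal_prefix_code :: "'a list set \<Rightarrow> 'a list set \<Rightarrow> bool" where
  "F_maximal_prefix_code F X \<longleftrightarrow> X \<subseteq> F \<and> prefix_code X \<and>
     (\<forall>Y. X \<subseteq> Y \<and> Y \<subseteq> F \<and> prefix_code Y \<longrightarrow> Y = X)"

definition F_maximal_suffix_code :: "'a list set \<Rightarrow> 'a list set \<Rightarrow> bool" where
  "F_maximal_suffix_code F X \<longleftrightarrow> X \<subseteq> F \<and> suffix_code X \<and>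
     (\<forall>Y. X \<subseteq> Y \<and> Y \<subseteq> F \<and> suffix_code Y \<longrightarrow> Y = X)"

definition F_maximal_bifix_code :: "'a list set \<Rightarrow> 'a list set \<Rightarrow> bool" where
  "F_maximal_bifix_code F X \<longleftrightarrow> X \<subseteq> F \<and> bifix_code X \<and>
     (\<forall>Y. X \<subseteq> Y \<and> Y \<subseteq> F \<and> bifix_code Y \<longrightarrow> Y = X)"

definition star :: "'a list set \<Rightarrow> 'a list set" where
  "star X = {concat xs | xs. set xs \<subseteq> X}"

definition F_thin :: "'a list set \<Rightarrow> 'a list set \<Rightarrow> bool" where
  "F_thin F X \<longleftrightarrow> (\<exists>w\<in>F. \<forall>x\<in>X. \<not> factor w x)"

definition right_F_complete :: "'a list set \<Rightarrow> 'a list set \<Rightarrow> bool" where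
  "right_F_complete F X \<longleftrightarrow> (\<forall>w\<in>F. \<exists>z\<in>star X. prefix w z)"

definition left_F_complete :: "'a list set \<Rightarrow> 'a list set \<Rightarrow> bool" where
  "left_F_complete F X \<longleftrightarrow> (\<forall>w\<in>F. \<exists>z\<in>star X. suffix w z)"

end

theory Submission
  imports Defs
begin

lemma factor_sublist: "factor u w = sublist u w"
  by (simp add: factor_def sublist_def)

lemma starI: "set xs \<subseteq> X \<Longrightarrow> concat xs \<in> star X"
  by (auto simp: star_def)

lemma star_rev: "star (rev ` X) = rev ` star X"
proof
  show "star (rev ` X) \<subseteq> rev ` star X"
  proof
    fix z assume "z \<in> star (rev ` X)"
    then obtain xs where xs: "z = concat xs" "set xs \<subseteq> rev ` X" by (auto simp: star_def)
    have "rev z = concat (map rev (rev xs))" by (simp add: xs rev_concat)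
    moreover have "set (map rev (rev xs)) \<subseteq> X" using xs(2) by auto
    ultimately have "rev z \<in> star X" by (metis starI)
    then show "z \<in> rev ` star X" by (metis image_eqI rev_rev_ident)
  qed
next
  show "rev ` star X \<subseteq> star (rev ` X)"
  proof
    fix z assume "z \<in> rev ` star X"
    then obtain xs where xs: "z = rev (concat xs)" "set xs \<subseteq> X" by (auto simp: star_def)
    have "z = concat (map rev (rev xs))" by (simp add: xs rev_concat)
    moreover have "set (map rev (rev xs)) \<subseteq> rev ` X" using xs(2) by auto
    ultimately show "z \<in> star (rev ` X)" by (metis starI)
  qed
qed

lemma prefix_code_rev: "prefix_code (rev ` X) \<longleftrightarrow> suffix_code X"
  unfolding prefix_code_def suffix_code_def
  by (auto simp: strict_suffix_to_prefix)

lemma suffix_code_rev: "suffix_code (rev ` X) \<longleftrightarrow> prefix_code X"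
  using prefix_code_rev[of "rev ` X"] by (simp add: image_image)

lemma left_rev: "left_F_complete (rev ` F) (rev ` X) \<longleftrightarrow> right_F_complete F X"
  unfolding left_F_complete_def right_F_complete_def star_rev
  by (auto simp: suffix_to_prefix)

lemma right_rev: "right_F_complete (rev ` F) (rev ` X) \<longleftrightarrow> left_F_complete F X"
  using left_rev[of "rev ` F" "rev ` X"] by (simp add: image_image)

lemma thin_rev: "F_thin (rev ` F) (rev ` X) \<longleftrightarrow> F_thin F X"
  unfolding F_thin_def factor_sublist
  by (auto simp: sublist_rev_left)

lemma factorial_rev: "factorial A F \<Longrightarrow> factorial A (rev ` F)"
  unfolding factorial_def factor_sublist
  by (auto simp: sublist_rev_right) (metis image_eqI rev_rev_ident)

lemma recurrent_rev: "recurrent A F \<Longrightarrow> recurrent A (rev ` F)"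
  unfolding recurrent_def
proof (intro conjI ballI)
  assume h: "factorial A F \<and> (\<forall>u\<in>F. \<forall>w\<in>F. \<exists>v\<in>F. u @ v @ w \<in> F)"
  then show "factorial A (rev ` F)" using factorial_rev by blast
  fix u w assume "u \<in> rev ` F" "w \<in> rev ` F"
  then obtain u' w' where "u = rev u'" "w = rev w'" "u' \<in> F" "w' \<in> F" by auto
  then obtain v where "v \<in> F" "w' @ v @ u' \<in> F" using h by blast
  then show "\<exists>v\<in>rev ` F. u @ v @ w \<in> rev ` F"
    using \<open>u = rev u'\<close> \<open>w = rev w'\<close>
    by (intro bexI[of _ "rev v"]) (auto intro!: image_eqI[of _ rev "w' @ v @ u'"])
qed


lemma pc_eq: "prefix_code X \<Longrightarrow> x \<in> X \<Longrightarrow> y \<in> X \<Longrightarrow> prefix x y \<Longrightarrow> x = y"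
  unfolding prefix_code_def by (auto simp: strict_prefix_def)

lemma pc_nil: "prefix_code X \<Longrightarrow> [] \<notin> X"
  unfolding prefix_code_def by auto

lemma star_prefix_cancel:
  assumes pc: "prefix_code X"
  shows "set xs \<subseteq> X \<Longrightarrow> set ys \<subseteq> X \<Longrightarrow> prefix (concat xs) (concat ys) \<Longrightarrow> \<exists>zs. ys = xs @ zs"
proof (induction xs arbitrary: ys)
  case Nil
  then show ?case by auto
next
  case (Cons x xs)
  have xne: "x \<noteq> []" using Cons.prems pc_nil[OF pc] by auto
  then obtain y ys' where ys: "ys = y # ys'" using Cons.prems by (cases ys) auto
  have "prefix x (x @ concat xs)" by simp
  then have "prefix x (concat ys)" using Cons.prems(3) by (metis concat.simps(2) prefix_order.trans)
  moreover have "prefix y (concat ys)" using ys by auto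
  ultimately have "prefix x y \<or> prefix y x" using prefix_same_cases by blast
  then have "x = y" using pc_eq[OF pc, of x y] pc_eq[OF pc, of y x] Cons.prems ys by auto
  then have "prefix (concat xs) (concat ys')" using Cons.prems(3) ys by auto
  then obtain zs where "ys' = xs @ zs" using Cons.IH Cons.prems ys by auto
  then show ?case using ys \<open>x = y\<close> by auto
qed

lemma parse_unique:
  assumes pc: "prefix_code X"
    and h: "set xs \<subseteq> X" "set ys \<subseteq> X" "\<exists>x\<in>X. strict_prefix q1 x" "\<exists>x\<in>X. strict_prefix q2 x"
      "concat xs @ q1 = concat ys @ q2"
  shows "q1 = q2"
proof -
  have gen: "q1 = q2" if a: "set xs \<subseteq> X" "set ys \<subseteq> X" "\<exists>x\<in>X. strict_prefix q1 x"
      "\<exists>x\<in>X. strict_prefix q2 x" "concat xs @ q1 = concat ys @ q2"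
      "length (concat xs) \<le> length (concat ys)" for xs ys q1 q2
  proof -
    have "prefix (concat xs) (concat ys)"
      using a(5,6) by (metis prefix_length_prefix prefix_def)
    then obtain zs where zs: "ys = xs @ zs" using star_prefix_cancel[OF pc, of xs ys] a(1,2) by blast
    then have q1: "q1 = concat zs @ q2" using a(5) by simp
    show ?thesis
    proof (cases zs)
      case Nil then show ?thesis using q1 by simp
    next
      case (Cons z zs')
      have "z \<in> X" using zs Cons a(2) by auto
      have "z \<noteq> []" using \<open>z \<in> X\<close> pc_nil[OF pc] by auto
      obtain x where x: "x \<in> X" "strict_prefix q1 x" using a(3) by blast
      have "prefix z q1" using q1 Cons by simp
      then have "strict_prefix z x" using x(2) by (auto intro: prefix_order.le_less_trans)
      then show ?thesis using pc \<open>z \<in> X\<close> x(1) unfolding prefix_code_def by blast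
    qed
  qed
  show ?thesis
  proof (cases "length (concat xs) \<le> length (concat ys)")
    case True then show ?thesis using gen h by blast
  next
    case False then show ?thesis using gen[of ys xs q2 q1] h by force
  qed
qed

lemma parse_split:
  assumes pq: "\<exists>x\<in>X. strict_prefix q' x"
  shows "set xs \<subseteq> X \<Longrightarrow> w @ h = concat xs @ q' \<Longrightarrow>
    \<exists>ys q zs. set ys \<subseteq> X \<and> set zs \<subseteq> X \<and> (\<exists>x\<in>X. strict_prefix q x) \<and>
      w = concat ys @ q \<and> q @ h = concat zs @ q'"
proof (induction xs arbitrary: w)
  case Nil
  then have "prefix w q'" by (metis concat.simps(1) prefix_def append_Nil)
  then have "\<exists>x\<in>X. strict_prefix w x" using pq by (auto intro: prefix_order.le_less_trans)
  then show ?case using Nil by (intro exI[of _ "[]"] exI[of _ w]) auto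
next
  case (Cons x xs)
  show ?case
  proof (cases "length w < length x")
    case True
    have "prefix w (x @ (concat xs @ q' ))" using Cons.prems by (metis concat.simps(2) append.assoc prefix_def)
    moreover have "prefix x (x @ (concat xs @ q'))" by simp
    ultimately have "prefix w x" using True prefix_length_prefix[of w _ x] by simp
    then have "strict_prefix w x" using True by (auto simp: strict_prefix_def)
    then show ?thesis using Cons.prems
      by (intro exI[of _ "[]"] exI[of _ w] exI[of _ "x # xs"]) auto
  next
    case False
    have "prefix x (w @ h)" using Cons.prems by simp
    then have "prefix x w" using False
      by (metis prefix_length_prefix prefix_def linorder_not_less)
    then obtain w' where w': "w = x @ w'" by (auto simp: prefix_def)
    then have "w' @ h = concat xs @ q'" using Cons.prems by simp
    then obtain ys q zs where "set ys \<subseteq> X \<and> set zs \<subseteq> X \<and> (\<exists>x\<in>X. strict_prefix q x) \<and>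
      w' = concat ys @ q \<and> q @ h = concat zs @ q'" using Cons.IH[of w'] Cons.prems(1) by auto
    then show ?thesis using w' Cons.prems by (intro exI[of _ "x # ys"] exI[of _ q] exI[of _ zs]) auto
  qed
qed

lemma greedy:
  assumes "[] \<notin> X"
  shows "\<exists>ys r. set ys \<subseteq> X \<and> s = concat ys @ r \<and> (\<forall>x\<in>X. \<not> prefix x r)"
proof (induction s rule: length_induct)
  case (1 s)
  show ?case
  proof (cases "\<exists>x\<in>X. prefix x s")
    case True
    then obtain x s' where "x \<in> X" "s = x @ s'" by (auto simp: prefix_def)
    moreover have "x \<noteq> []" using assms \<open>x \<in> X\<close> by auto
    ultimately have "length s' < length s" by simp
    then obtain ys r where "set ys \<subseteq> X \<and> s' = concat ys @ r \<and> (\<forall>x\<in>X. \<not> prefix x r)" using 1 by blast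
    then show ?thesis using \<open>x \<in> X\<close> \<open>s = x @ s'\<close> by (intro exI[of _ "x # ys"] exI[of _ r]) auto
  next
    case False
    then show ?thesis by (intro exI[of _ "[]"] exI[of _ s]) auto
  qed
qed

lemma suffix_parse:
  "suffix s (concat xs) \<Longrightarrow> \<exists>p ys. s = p @ concat ys \<and> set ys \<subseteq> set xs \<and> (p = [] \<or> (\<exists>x\<in>set xs. suffix p x))"
proof (induction xs)
  case Nil
  then show ?case by (intro exI[of _ "[]"]) auto
next
  case (Cons x xs)
  from Cons.prems have "suffix s (concat xs) \<or> (\<exists>p. s = p @ concat xs \<and> suffix p x)"
    by (simp add: suffix_append)
  then show ?case
  proof
    assume "suffix s (concat xs)"
    then show ?thesis using Cons.IH by force
  next
    assume "\<exists>p. s = p @ concat xs \<and> suffix p x"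
    then show ?thesis by (metis list.set_intros(1) set_subset_Cons)
  qed
qed

lemma subsingleton_finite: "(\<forall>a\<in>S. \<forall>b\<in>S. a = b) \<Longrightarrow> finite S"
proof (cases "S = {}")
  case False
  assume h: "\<forall>a\<in>S. \<forall>b\<in>S. a = b"
  then obtain a where "a \<in> S" using False by auto
  then have "S \<subseteq> {a}" using h by auto
  then show ?thesis using finite_subset by auto
qed simp


lemma core:
  assumes rec: "recurrent A F" and XF: "X \<subseteq> F" and thin: "F_thin F X"
    and pc: "prefix_code X" and lc: "left_F_complete F X"
  shows "suffix_code X \<and> right_F_complete F X"
proof (cases "X = {}")
  case True
  have "right_F_complete F X"
    unfolding right_F_complete_def
  proof
    fix w assume "w \<in> F"
    then obtain z where "z \<in> star X" "suffix w z" using lc unfolding left_F_complete_def by blast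
    then have "z = []" using True by (auto simp: star_def)
    then show "\<exists>z\<in>star X. prefix w z" using \<open>suffix w z\<close> \<open>z \<in> star X\<close> by auto
  qed
  then show ?thesis using True by (simp add: suffix_code_def)
next
  case Xne: False
  have fac: "\<And>w u. w \<in> F \<Longrightarrow> factor u w \<Longrightarrow> u \<in> F"
    using rec unfolding recurrent_def factorial_def by blast
  have rc: "\<And>u w. u \<in> F \<Longrightarrow> w \<in> F \<Longrightarrow> \<exists>v\<in>F. u @ v @ w \<in> F"
    using rec unfolding recurrent_def by blast
  have pref_in: "\<And>u v. u @ v \<in> F \<Longrightarrow> u \<in> F"
  proof -
    fix u v assume "u @ v \<in> F"
    moreover have "\<exists>p s. u @ v = p @ u @ s" by (intro exI[of _ "[]"] exI[of _ v]) simp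
    ultimately show "u \<in> F" using fac unfolding factor_def by blast
  qed
  obtain W where W: "W \<in> F" "\<forall>x\<in>X. \<not> factor W x" using thin unfolding F_thin_def by blast
  have Wne: "W \<noteq> []"
  proof
    assume "W = []"
    obtain x where "x \<in> X" using Xne by auto
    moreover have "factor [] x" unfolding factor_def by (intro exI[of _ "[]"] exI[of _ x]) simp
    ultimately show False using W(2) \<open>W = []\<close> by blast
  qed
  have nilX: "[] \<notin> X" using pc_nil[OF pc] .
  define pp where "pp q \<longleftrightarrow> (\<exists>x\<in>X. strict_prefix q x)" for q
  have pp_nil: "pp []" using Xne nilX unfolding pp_def by (auto simp: strict_prefix_def)
  define Q where "Q g = {q. pp q \<and> (\<exists>j<length W. \<exists>ys. set ys \<subseteq> X \<and> drop j W @ g = concat ys @ q)}" for g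
  define reach where "reach q h q' \<longleftrightarrow> pp q' \<and> (\<exists>zs. set zs \<subseteq> X \<and> q @ h = concat zs @ q')" for q h q'
  define f where "f h q = (THE q'. reach q h q')" for h q
  have uniq: "a = b" if r: "reach q h a" "reach q h b" for q h a b
  proof -
    obtain zs zs' where "set zs \<subseteq> X" "q @ h = concat zs @ a" "set zs' \<subseteq> X" "q @ h = concat zs' @ b" "pp a" "pp b"
      using r unfolding reach_def by blast
    then show ?thesis using parse_unique[OF pc, of zs zs' a b] unfolding pp_def by simp
  qed
  have fI: "reach q h (f h q)" if "reach q h q'" for q h q'
    unfolding f_def by (rule theI[of _ q']) (use that uniq in blast)+
  have fE: "f h q = q'" if "reach q h q'" for q h q'
    using fI[OF that] uniq that by blast
  have finQ: "finite (Q g)" for g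
  proof -
    have "Q g = (\<Union>j\<in>{..<length W}. {q. pp q \<and> (\<exists>ys. set ys \<subseteq> X \<and> drop j W @ g = concat ys @ q)})"
      unfolding Q_def by auto
    moreover have "finite {q. pp q \<and> (\<exists>ys. set ys \<subseteq> X \<and> drop j W @ g = concat ys @ q)}" for j
    proof (rule subsingleton_finite, intro ballI)
      fix a b assume "a \<in> {q. pp q \<and> (\<exists>ys. set ys \<subseteq> X \<and> drop j W @ g = concat ys @ q)}"
        "b \<in> {q. pp q \<and> (\<exists>ys. set ys \<subseteq> X \<and> drop j W @ g = concat ys @ q)}"
      then obtain ys ys' where "pp a" "pp b" "set ys \<subseteq> X" "set ys' \<subseteq> X" "drop j W @ g = concat ys @ a"
        "drop j W @ g = concat ys' @ b" by blast
      then show "a = b" using parse_unique[OF pc, of ys ys' a b] unfolding pp_def by simp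
    qed
    ultimately show ?thesis by simp
  qed
  have nilQ: "[] \<in> Q g" if Wg: "W @ g \<in> F" for g
  proof -
    obtain z where "z \<in> star X" "suffix (W @ g) z" using lc Wg unfolding left_F_complete_def by blast
    from \<open>z \<in> star X\<close> obtain xs where "z = concat xs" "set xs \<subseteq> X" unfolding star_def by blast
    then have xs: "set xs \<subseteq> X" "suffix (W @ g) (concat xs)" using \<open>suffix (W @ g) z\<close> by simp_all
    obtain p ys where py: "W @ g = p @ concat ys" "set ys \<subseteq> set xs" "p = [] \<or> (\<exists>x\<in>set xs. suffix p x)"
      using suffix_parse[OF xs(2)] by blast
    have plen: "length p < length W"
    proof (rule ccontr)
      assume "\<not> length p < length W"
      moreover have "prefix W (W @ g)" by simp
      moreover have "prefix p (W @ g)" using py(1) by simp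
      ultimately have "prefix W p" using prefix_length_prefix[of W "W @ g" p] by simp
      then have "p \<noteq> []" using Wne by auto
      then obtain x where "x \<in> set xs" "suffix p x" using py(3) by blast
      obtain t where t: "p = W @ t" using \<open>prefix W p\<close> unfolding prefix_def by blast
      obtain s' where s': "x = s' @ p" using \<open>suffix p x\<close> unfolding suffix_def by blast
      have "x = s' @ W @ t" using t s' by simp
      then have "factor W x" unfolding factor_def by blast
      then show False using W(2) xs(1) \<open>x \<in> set xs\<close> by auto
    qed
    have "drop (length p) (W @ g) = concat ys" using py(1) by simp
    moreover have "drop (length p) (W @ g) = drop (length p) W @ g" using plen by simp
    ultimately have e: "drop (length p) W @ g = concat ys @ []" by simp
    have ys: "set ys \<subseteq> X" using py(2) xs(1) by blast
    show ?thesis unfolding Q_def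
      by (intro CollectI conjI pp_nil exI[of _ "length p"] plen exI[of _ ys] ys e)
  qed
  define D where "D g h = {q \<in> Q g. \<exists>q'. reach q h q'}" for g h
  have trans: "Q (g @ h) = f h ` D g h" for g h
  proof
    show "f h ` D g h \<subseteq> Q (g @ h)"
    proof
      fix q' assume "q' \<in> f h ` D g h"
      then obtain q where q: "q \<in> Q g" "reach q h q'" unfolding D_def using fI by blast
      then obtain j ys zs where "j < length W" "set ys \<subseteq> X" "drop j W @ g = concat ys @ q"
        "pp q'" "set zs \<subseteq> X" "q @ h = concat zs @ q'" unfolding Q_def reach_def by blast
      then have "drop j W @ g @ h = concat ys @ (q @ h)" by (metis append.assoc)
      then have e: "drop j W @ (g @ h) = concat (ys @ zs) @ q'" using \<open>q @ h = concat zs @ q'\<close> by simp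
      have ys: "set (ys @ zs) \<subseteq> X" using \<open>set ys \<subseteq> X\<close> \<open>set zs \<subseteq> X\<close> by simp
      show "q' \<in> Q (g @ h)" unfolding Q_def
        by (intro CollectI conjI \<open>pp q'\<close> exI[of _ j] \<open>j < length W\<close> exI[of _ "ys @ zs"] ys e)
    qed
  next
    show "Q (g @ h) \<subseteq> f h ` D g h"
    proof
      fix q' assume "q' \<in> Q (g @ h)"
      then obtain j ys where j: "pp q'" "j < length W" "set ys \<subseteq> X" "(drop j W @ g) @ h = concat ys @ q'"
        unfolding Q_def by auto
      then obtain ys1 q zs where "set ys1 \<subseteq> X" "set zs \<subseteq> X" "pp q" "drop j W @ g = concat ys1 @ q"
          "q @ h = concat zs @ q'"
        using parse_split[where q'=q' and X=X and xs=ys and w="drop j W @ g" and h=h] unfolding pp_def by blast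
      then have "q \<in> Q g" "reach q h q'" unfolding Q_def reach_def using j by auto
      then have "q \<in> D g h" "f h q = q'" unfolding D_def using fE by auto
      then show "q' \<in> f h ` D g h" by (auto intro: rev_image_eqI)
    qed
  qed
  have cardle: "card (Q (g @ h)) \<le> card (Q g)" for g h
  proof -
    have "card (Q (g @ h)) \<le> card (D g h)" unfolding trans by (rule card_image_le) (use finQ[of g] in \<open>auto simp: D_def\<close>)
    also have "\<dots> \<le> card (Q g)" by (rule card_mono[OF finQ]) (auto simp: D_def)
    finally show ?thesis .
  qed
  have cardeq: "(\<forall>q\<in>Q g. \<exists>q'. reach q h q') \<and> inj_on (f h) (Q g)"
    if "card (Q g) \<le> card (Q (g @ h))" for g h
  proof -
    have finD: "finite (D g h)" using finQ[of g] by (auto simp: D_def)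
    have sub: "D g h \<subseteq> Q g" by (auto simp: D_def)
    have c1: "card (f h ` D g h) \<le> card (D g h)" using card_image_le[OF finD] .
    have c2: "card (D g h) \<le> card (Q g)" by (rule card_mono[OF finQ sub])
    have e: "card (f h ` D g h) = card (Q g)" using that c1 c2 trans[of g h] by simp
    then have "card (D g h) = card (Q g)" using c1 c2 by simp
    then have "D g h = Q g" using card_subset_eq[OF finQ sub] by simp
    moreover have "inj_on (f h) (D g h)" using eq_card_imp_inj_on[OF finD] e \<open>card (D g h) = card (Q g)\<close> by simp
    ultimately show ?thesis unfolding D_def by auto
  qed
  obtain g0 where g0: "W @ g0 \<in> F" "\<And>g. W @ g \<in> F \<Longrightarrow> card (Q g0) \<le> card (Q g)"
    using ex_has_least_nat[of "\<lambda>g. W @ g \<in> F" "[]" "\<lambda>g. card (Q g)"] W(1) by auto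
  have stab: "card (Q (g0 @ k)) \<le> card (Q ((g0 @ k) @ h))" if "W @ g0 @ k @ h \<in> F" for k h
  proof -
    have "card (Q g0) \<le> card (Q ((g0 @ k) @ h))" using g0(2)[of "(g0 @ k) @ h"] that by simp
    moreover have "card (Q (g0 @ k)) \<le> card (Q g0)" using cardle by blast
    ultimately show ?thesis by simp
  qed
  have rcomp: "right_F_complete F X"
    unfolding right_F_complete_def
  proof
    fix s assume "s \<in> F"
    obtain v where "v \<in> F" "(W @ g0) @ v @ s \<in> F" using rc[OF g0(1) \<open>s \<in> F\<close>] by blast
    then have in1: "W @ g0 @ v @ s \<in> F" by simp
    then have "W @ (g0 @ v) \<in> F" using pref_in[of "W @ g0 @ v" s] by simp
    then have "[] \<in> Q (g0 @ v)" by (rule nilQ)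
    moreover have "card (Q (g0 @ v)) \<le> card (Q ((g0 @ v) @ s))" using stab in1 by blast
    ultimately obtain q' where "reach [] s q'" using cardeq by blast
    then obtain zs x where "set zs \<subseteq> X" "s = concat zs @ q'" "x \<in> X" "strict_prefix q' x"
      unfolding reach_def pp_def by auto
    then have "prefix s (concat (zs @ [x]))" by (auto simp: strict_prefix_def prefix_def)
    moreover have "concat (zs @ [x]) \<in> star X" using \<open>set zs \<subseteq> X\<close> \<open>x \<in> X\<close> by (intro starI) auto
    ultimately show "\<exists>z\<in>star X. prefix s z" by blast
  qed
  have sc: "suffix_code X"
    unfolding suffix_code_def
  proof (intro conjI ballI notI)
    show "[] \<in> X \<Longrightarrow> False" using nilX by simp
    fix x y assume xy: "x \<in> X" "y \<in> X" "strict_suffix x y"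
    then obtain u where u: "y = u @ x" "u \<noteq> []" by (auto simp: strict_suffix_def suffix_def)
    have xne: "x \<noteq> []" using xy nilX by auto
    obtain v where "v \<in> F" "(W @ g0) @ v @ y \<in> F" using rc[OF g0(1)] xy XF by blast
    then have in1: "W @ g0 @ v @ u @ x \<in> F" using u by simp
    define g1 where "g1 = g0 @ v"
    have in2: "W @ g1 @ u \<in> F" using pref_in[of "W @ g1 @ u" x] in1 unfolding g1_def by simp
    have in3: "W @ g1 \<in> F" using pref_in[of "W @ g1" u] in2 by simp
    have "card (Q g1) \<le> card (Q (g1 @ u))" using stab[of v u] in2 unfolding g1_def by simp
    then obtain q1 where q1: "reach [] u q1" using cardeq nilQ[OF in3] by blast
    have "card (Q (g1 @ u)) \<le> card (Q ((g1 @ u) @ x))" using stab[of "v @ u" x] in1 unfolding g1_def by simp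
    then have all: "\<forall>q\<in>Q (g1 @ u). \<exists>q'. reach q x q'" and inj: "inj_on (f x) (Q (g1 @ u))"
      using cardeq by blast+
    have "[] \<in> D g1 u" "f u [] = q1" using nilQ[OF in3] q1 fE unfolding D_def by auto
    then have q1Q: "q1 \<in> Q (g1 @ u)" using trans[of g1 u] by (auto intro: rev_image_eqI)
    have nilQ2: "[] \<in> Q (g1 @ u)" using nilQ in2 by simp
    have r0: "reach [] x []" unfolding reach_def using pp_nil xy(1)
      by (intro conjI exI[of _ "[x]"]) auto
    obtain q2 where r2: "reach q1 x q2" using all q1Q by blast
    obtain zs1 zs2 where z: "set zs1 \<subseteq> X" "u = concat zs1 @ q1" "set zs2 \<subseteq> X" "q1 @ x = concat zs2 @ q2" "pp q2"
      using q1 r2 unfolding reach_def by auto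
    have "concat [y] @ [] = concat (zs1 @ zs2) @ q2" using z u by simp
    then have "q2 = []" using parse_unique[OF pc, of "[y]" "zs1 @ zs2" "[]" q2] xy(2) z pp_nil
      unfolding pp_def by auto
    then have "f x q1 = f x []" using fE r2 r0 by simp
    then have "q1 = []" using inj q1Q nilQ2 by (auto dest: inj_onD)
    then have "u = concat zs1" using z by simp
    then obtain z zs' where "zs1 = z # zs'" using u(2) by (cases zs1) auto
    then have "z \<in> X" "y = z @ (concat zs' @ x)" using z(1) u \<open>u = concat zs1\<close> by auto
    then have "strict_prefix z y" using xne by (auto simp: strict_prefix_def)
    then show False using pc \<open>z \<in> X\<close> xy(2) unfolding prefix_code_def by blast
  qed
  show ?thesis using sc rcomp by blast
qed


lemma core':
  assumes rec: "recurrent A F" and XF: "X \<subseteq> F" and thin: "F_thin F X"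
    and sc: "suffix_code X" and rc: "right_F_complete F X"
  shows "prefix_code X \<and> left_F_complete F X"
proof -
  have "suffix_code (rev ` X) \<and> right_F_complete (rev ` F) (rev ` X)"
    by (rule core[OF recurrent_rev[OF rec]])
       (use XF thin sc rc in \<open>auto simp: thin_rev prefix_code_rev left_rev\<close>)
  then show ?thesis by (simp add: suffix_code_rev right_rev)
qed

lemma L1:
  assumes XF: "X \<subseteq> F" and pc: "prefix_code X" and rc: "right_F_complete F X"
  shows "F_maximal_prefix_code F X"
  unfolding F_maximal_prefix_code_def
proof (intro conjI allI impI XF pc)
  fix Y assume Y: "X \<subseteq> Y \<and> Y \<subseteq> F \<and> prefix_code Y"
  have "Y \<subseteq> X"
  proof
    fix y assume "y \<in> Y"
    then have "y \<in> F" "y \<noteq> []" using Y pc_nil by auto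
    then obtain z where "z \<in> star X" "prefix y z" using rc unfolding right_F_complete_def by blast
    then obtain zs where zs: "z = concat zs" "set zs \<subseteq> X" unfolding star_def by blast
    then obtain x zs' where "zs = x # zs'" using \<open>prefix y z\<close> \<open>y \<noteq> []\<close> by (cases zs) auto
    then have "x \<in> X" "prefix x z" using zs by auto
    then have "prefix x y \<or> prefix y x" using \<open>prefix y z\<close> prefix_same_cases by blast
    then have "x = y" using pc_eq[of Y x y] pc_eq[of Y y x] Y \<open>x \<in> X\<close> \<open>y \<in> Y\<close> by auto
    then show "y \<in> X" using \<open>x \<in> X\<close> by simp
  qed
  then show "Y = X" using Y by auto
qed

lemma my_inj_rev: "inj rev"
  by (rule injI) simp

lemma maxpre_rev: "F_maximal_prefix_code (rev ` F) (rev ` X) \<Longrightarrow> F_maximal_suffix_code F X"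
  unfolding F_maximal_prefix_code_def F_maximal_suffix_code_def
proof (intro conjI allI impI)
  assume h: "rev ` X \<subseteq> rev ` F \<and> prefix_code (rev ` X) \<and>
    (\<forall>Y. rev ` X \<subseteq> Y \<and> Y \<subseteq> rev ` F \<and> prefix_code Y \<longrightarrow> Y = rev ` X)"
  show "X \<subseteq> F" using h inj_image_subset_iff[OF my_inj_rev, of X F] by blast
  show "suffix_code X" using h prefix_code_rev by blast
  fix Y assume Y: "X \<subseteq> Y \<and> Y \<subseteq> F \<and> suffix_code Y"
  have a: "rev ` X \<subseteq> rev ` Y" using Y by (intro image_mono) blast
  have b: "rev ` Y \<subseteq> rev ` F" using Y by (intro image_mono) blast
  have c: "prefix_code (rev ` Y)" using Y prefix_code_rev[of Y] by blast
  have "rev ` Y = rev ` X" using h a b c by blast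
  then show "Y = X" using inj_image_eq_iff[OF my_inj_rev, of Y X] by blast
qed

lemma L1':
  assumes XF: "X \<subseteq> F" and sc: "suffix_code X" and lc: "left_F_complete F X"
  shows "F_maximal_suffix_code F X"
proof (rule maxpre_rev, rule L1)
  show "rev ` X \<subseteq> rev ` F" using XF by (rule image_mono)
  show "prefix_code (rev ` X)" using sc prefix_code_rev by blast
  show "right_F_complete (rev ` F) (rev ` X)" using lc right_rev by blast
qed

lemma rword:
  assumes fac: "factorial A F" and pc: "prefix_code X" and nrc: "\<not> right_F_complete F X"
  shows "\<exists>r\<in>F. r \<noteq> [] \<and> (\<forall>t. \<forall>x\<in>X. \<not> prefix x (r @ t))"
proof -
  obtain s where s: "s \<in> F" "\<forall>z\<in>star X. \<not> prefix s z" using nrc unfolding right_F_complete_def by blast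
  obtain ys r where g: "set ys \<subseteq> X" "s = concat ys @ r" "\<forall>x\<in>X. \<not> prefix x r"
    using greedy[OF pc_nil[OF pc]] by blast
  have "r \<noteq> []"
  proof
    assume "r = []"
    then have "s \<in> star X" using g starI by auto
    then show False using s by auto
  qed
  moreover have "r \<in> F"
  proof -
    have "factor r s" unfolding factor_def using g(2) by (intro exI[of _ "concat ys"] exI[of _ "[]"]) simp
    then show ?thesis using fac s(1) unfolding factorial_def by blast
  qed
  moreover have "\<forall>t. \<forall>x\<in>X. \<not> prefix x (r @ t)"
  proof (intro allI ballI notI)
    fix t x assume "x \<in> X" "prefix x (r @ t)"
    moreover have "prefix r (r @ t)" by simp
    ultimately have "prefix r x" using g(3) prefix_same_cases by blast
    then have "prefix s (concat (ys @ [x]))" using g(2) by (auto simp: prefix_def)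
    moreover have "concat (ys @ [x]) \<in> star X" using g(1) \<open>x \<in> X\<close> by (intro starI) auto
    ultimately show False using s(2) by blast
  qed
  ultimately show ?thesis by blast
qed

lemma lword:
  assumes fac: "factorial A F" and sc: "suffix_code X" and nlc: "\<not> left_F_complete F X"
  shows "\<exists>l\<in>F. l \<noteq> [] \<and> (\<forall>t. \<forall>x\<in>X. \<not> suffix x (t @ l))"
proof -
  obtain r where r: "r \<in> rev ` F" "r \<noteq> []" "\<forall>t. \<forall>x\<in>rev ` X. \<not> prefix x (r @ t)"
    using rword[OF factorial_rev[OF fac], of "rev ` X"] sc nlc by (auto simp: prefix_code_rev right_rev)
  show ?thesis
  proof (intro bexI[of _ "rev r"] conjI allI ballI notI)
    show "rev r \<in> F" using r(1) by auto
    show "rev r = [] \<Longrightarrow> False" using r(2) by simp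
    fix t x assume "x \<in> X" "suffix x (t @ rev r)"
    then have "prefix (rev x) (r @ rev t)" by (simp add: suffix_to_prefix)
    then show False using r(3) \<open>x \<in> X\<close> by blast
  qed
qed

lemma Mlemma:
  assumes rec: "recurrent A F" and XF: "X \<subseteq> F" and thin: "F_thin F X"
    and mb: "F_maximal_bifix_code F X"
  shows "right_F_complete F X \<or> left_F_complete F X"
proof (rule ccontr)
  assume "\<not> (right_F_complete F X \<or> left_F_complete F X)"
  then have nrc: "\<not> right_F_complete F X" and nlc: "\<not> left_F_complete F X" by auto
  have fac: "factorial A F" using rec unfolding recurrent_def by blast
  have rc: "\<And>u w. u \<in> F \<Longrightarrow> w \<in> F \<Longrightarrow> \<exists>v\<in>F. u @ v @ w \<in> F"
    using rec unfolding recurrent_def by blast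
  have bc: "bifix_code X" using mb unfolding F_maximal_bifix_code_def by blast
  then have pc: "prefix_code X" and sc: "suffix_code X" unfolding bifix_code_def by auto
  obtain W where W: "W \<in> F" "\<forall>x\<in>X. \<not> factor W x" using thin unfolding F_thin_def by blast
  obtain r where r: "r \<in> F" "r \<noteq> []" "\<forall>t. \<forall>x\<in>X. \<not> prefix x (r @ t)" using rword[OF fac pc nrc] by blast
  obtain l where l: "l \<in> F" "l \<noteq> []" "\<forall>t. \<forall>x\<in>X. \<not> suffix x (t @ l)" using lword[OF fac sc nlc] by blast
  obtain v where v: "v \<in> F" "r @ v @ W \<in> F" using rc[OF r(1) W(1)] by blast
  obtain v' where v': "v' \<in> F" "(r @ v @ W) @ v' @ l \<in> F" using rc[OF v(2) l(1)] by blast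
  define z where "z = r @ v @ W @ v' @ l"
  have zF: "z \<in> F" using v' unfolding z_def by simp
  have zW: "factor W z" unfolding z_def factor_def by (intro exI[of _ "r @ v"] exI[of _ "v' @ l"]) simp
  have znX: "z \<notin> X" using zW W(2) by blast
  have nofac: "\<not> factor z x" if "x \<in> X" for x
  proof
    assume "factor z x"
    then obtain p s where "x = p @ z @ s" unfolding factor_def by blast
    then have "x = (p @ r @ v) @ W @ (v' @ l @ s)" unfolding z_def by simp
    then have "factor W x" unfolding factor_def by blast
    then show False using W(2) that by blast
  qed
  have zne: "z \<noteq> []" using r(2) unfolding z_def by simp
  have pre: "\<not> prefix x z" if "x \<in> X" for x using r(3) that unfolding z_def by blast
  have suf: "\<not> suffix x z" if "x \<in> X" for x
  proof -
    have "z = (r @ v @ W @ v') @ l" unfolding z_def by simp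
    then show ?thesis using l(3)[rule_format, of x "r @ v @ W @ v'"] that by simp
  qed
  have pre2: "\<not> prefix z x" if "x \<in> X" for x
  proof
    assume "prefix z x"
    then obtain t where "x = [] @ z @ t" unfolding prefix_def by auto
    then show False using nofac[OF that] unfolding factor_def by blast
  qed
  have suf2: "\<not> suffix z x" if "x \<in> X" for x
  proof
    assume "suffix z x"
    then obtain t where "x = t @ z @ []" unfolding suffix_def by auto
    then show False using nofac[OF that] unfolding factor_def by blast
  qed
  have "prefix_code (insert z X)"
    using pc zne pre pre2 unfolding prefix_code_def
    by (auto simp: strict_prefix_def)
  moreover have "suffix_code (insert z X)"
    using sc zne suf suf2 unfolding suffix_code_def
    by (auto simp: strict_suffix_def)
  ultimately have "bifix_code (insert z X)" unfolding bifix_code_def by blast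
  moreover have "insert z X \<subseteq> F" using XF zF by auto
  ultimately have "insert z X = X" using mb unfolding F_maximal_bifix_code_def by blast
  then show False using znX by blast
qed

theorem mainTheorem1:
  fixes A :: "'a set" and F X :: "'a list set"
  assumes "finite A"
    and "recurrent A F"
    and "X \<subseteq> F"
    and "F_thin F X"
  shows "(F_maximal_bifix_code F X \<longleftrightarrow> prefix_code X \<and> left_F_complete F X)
       \<and> (F_maximal_bifix_code F X \<longleftrightarrow> suffix_code X \<and> right_F_complete F X)
       \<and> (F_maximal_bifix_code F X \<longleftrightarrow> F_maximal_prefix_code F X \<and> F_maximal_suffix_code F X)"
proof -
  note rec = assms(2) and XF = assms(3) and thin = assms(4)
  have p12: "prefix_code X \<and> left_F_complete F X" if mb: "F_maximal_bifix_code F X"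
  proof -
    have bc: "prefix_code X" "suffix_code X" using mb unfolding F_maximal_bifix_code_def bifix_code_def by auto
    show ?thesis using Mlemma[OF rec XF thin mb] core'[OF rec XF thin bc(2)] bc(1) by blast
  qed
  have p22': "suffix_code X \<and> right_F_complete F X" if "prefix_code X \<and> left_F_complete F X"
    using core[OF rec XF thin] that by blast
  have p2'2: "prefix_code X \<and> left_F_complete F X" if "suffix_code X \<and> right_F_complete F X"
    using core'[OF rec XF thin] that by blast
  have p23: "F_maximal_prefix_code F X \<and> F_maximal_suffix_code F X" if h: "prefix_code X \<and> left_F_complete F X"
    using L1[OF XF] L1'[OF XF] h p22'[OF h] by blast
  have p31: "F_maximal_bifix_code F X" if h: "F_maximal_prefix_code F X \<and> F_maximal_suffix_code F X"
    using h unfolding F_maximal_bifix_code_def F_maximal_prefix_code_def F_maximal_suffix_code_def bifix_code_def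
    by blast
  show ?thesis using p12 p22' p2'2 p23 p31 by blast
qed

end
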